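(* Let $\mathbf{A}$ be a real $n\times n$ matrix that is totally $J$-sign-symmetric (TJS) (respectively, strictly totally $J$-sign-symmetric (STJS)). Then $\mathbf{A}^T$, as well as every principal submatrix of $\mathbf{A}$ and of $\mathbf{A}^T$, is TJS (respectively, STJS).
   Context: For $J\subseteq[m]=\{1,\ldots,m\}$, $J^c=[m]\setminus J$, an $m\times m$ matrix $(a_{ik})$ is $J$-sign-symmetric if $a_{ik}\ge0$ on $(J\times J)\cup(J^c\times J^c)$ and $a_{ik}\le0$ on $(J\times J^c)\cup(J^c\times J)$; strictly $J$-sign-symmetric if these inequalities are strict. The $j$th compound matrix $\mathbf{A}^{(j)}$ is the $\binom{n}{j}\times\binom{n}{j}$ matrix of all $j\times j$ minors with index sets in lexicographic order. $\mathbf{A}$ is TJS (resp. STJS) if $\mathbf{A}$ is $J$-sign-symmetric (resp. strictly $J$-sign-symmetric) for some $J\subseteq[n]$ and for every $j=2,\ldots,n$ the compound $\mathbf{A}^{(j)}$ is $J_j$-sign-symmetric (resp. strictly $J_j$-sign-symmetric) for some subset $J_j$ of its index set. A principal submatrix $\mathbf{A}(M)$, $M\subseteq[n]$, consists of the rows and columns with indices in $M$. *)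

theory Defs
  imports "Jordan_Normal_Form.Determinant" "Jordan_Normal_Form.DL_Submatrix"
begin

definition sign_sym_on :: "bool \<Rightarrow> 'i set \<Rightarrow> 'i set \<Rightarrow> ('i \<Rightarrow> 'i \<Rightarrow> real) \<Rightarrow> bool" where
  "sign_sym_on strict I J a \<longleftrightarrow> J \<subseteq> I \<and>
     (\<forall>i\<in>I. \<forall>k\<in>I.
        ((i \<in> J) = (k \<in> J) \<longrightarrow> (if strict then a i k > 0 else a i k \<ge> 0)) \<and>
        ((i \<in> J) \<noteq> (k \<in> J) \<longrightarrow> (if strict then a i k < 0 else a i k \<le> 0)))"

text \<open>Minor of A with row index set S and column index set T (indices in increasing order).\<close>
definition minor :: "real mat \<Rightarrow> nat set \<Rightarrow> nat set \<Rightarrow> real" where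
  "minor A S T = det (submatrix A S T)"

definition compound_index :: "nat \<Rightarrow> nat \<Rightarrow> nat set set" where
  "compound_index n j = {S. S \<subseteq> {0..<n} \<and> card S = j}"

definition total_sign_sym :: "bool \<Rightarrow> real mat \<Rightarrow> bool" where
  "total_sign_sym strict A \<longleftrightarrow> A \<in> carrier_mat (dim_row A) (dim_row A) \<and>
     (\<exists>J. sign_sym_on strict {0..<dim_row A} J (\<lambda>i k. A $$ (i, k))) \<and>
     (\<forall>j\<in>{2..dim_row A}. \<exists>Jj. sign_sym_on strict (compound_index (dim_row A) j) Jj (minor A))"

abbreviation TJS :: "real mat \<Rightarrow> bool" where "TJS \<equiv> total_sign_sym False"
abbreviation STJS :: "real mat \<Rightarrow> bool" where "STJS \<equiv> total_sign_sym True"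

definition principal_submatrix :: "real mat \<Rightarrow> nat set \<Rightarrow> real mat" where
  "principal_submatrix A M = submatrix A M M"

end

theory Submission
  imports Defs
begin

lemma ss_pull:
  assumes "sign_sym_on s I J a" "\<And>x. x \<in> I' \<Longrightarrow> f x \<in> I"
    "\<And>x y. x \<in> I' \<Longrightarrow> y \<in> I' \<Longrightarrow> b x y = a (f x) (f y)"
  shows "sign_sym_on s I' {x\<in>I'. f x \<in> J} b"
  using assms unfolding sign_sym_on_def by auto

lemma pick_mono_iff:
  assumes "s < card M" "x < card M"
  shows "pick M s < pick M x \<longleftrightarrow> s < x"
  using assms pick_mono[of _ M] by (metis not_less_iff_gr_or_eq order_less_asym')

lemma pick_inj: "inj_on (pick M) {..<card M}"
  by (rule inj_onI) (metis lessThan_iff nat_neq_iff pick_mono_iff)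

lemma pick_comp:
  assumes "S \<subseteq> {..<card M}" "a < card S"
  shows "pick (pick M ` S) a = pick M (pick S a)"
proof -
  let ?x = "pick S a"
  have xS: "?x \<in> S" using assms pick_in_set by blast
  hence xM: "?x < card M" using assms by auto
  have eq: "{y \<in> pick M ` S. y < pick M ?x} = pick M ` {s\<in>S. s < ?x}"
    using assms xM pick_mono_iff by auto
  have "inj_on (pick M) {s\<in>S. s < ?x}"
    using assms(1) by (auto intro: inj_on_subset[OF pick_inj])
  hence "card {y \<in> pick M ` S. y < pick M ?x} = a"
    unfolding eq using card_image card_pick assms(2) by metis
  moreover have "pick M ?x \<in> pick M ` S" using xS by auto
  ultimately show ?thesis using pick_card_in_set by metis
qed

lemma submatrix_transpose:
  "submatrix (transpose_mat A) S T = transpose_mat (submatrix A T S)"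
proof (rule eq_matI)
  fix i j assume ij: "i < dim_row (transpose_mat (submatrix A T S))" "j < dim_col (transpose_mat (submatrix A T S))"
  hence i: "i < card {j. j < dim_col A \<and> j \<in> S}" and j: "j < card {i. i < dim_row A \<and> i \<in> T}"
    by (simp_all add: dim_submatrix)
  have pi: "pick S i < dim_col A" using pick_le[OF i] .
  have pj: "pick T j < dim_row A" using pick_le[OF j] .
  show "submatrix (transpose_mat A) S T $$ (i, j) = transpose_mat (submatrix A T S) $$ (i, j)"
    using i j pi pj by (simp add: submatrix_index dim_submatrix)
qed (simp_all add: dim_submatrix)

lemma tss_transpose:
  assumes "total_sign_sym s A"
  shows "total_sign_sym s (transpose_mat A)"
proof -
  let ?n = "dim_row A"
  note D = assms[unfolded total_sign_sym_def]
  have A: "A \<in> carrier_mat ?n ?n" using D by (rule conjunct1)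
  have cA: "dim_col A = ?n" using A by (rule carrier_matD(2))
  have dr: "dim_row (transpose_mat A) = ?n" using cA by simp
  obtain J where J: "sign_sym_on s {0..<?n} J (\<lambda>i k. A $$ (i, k))"
    using D by (elim conjE exE)
  have sym: "sign_sym_on s I Jj (\<lambda>S T. a T S)" if "sign_sym_on s I Jj a" for I Jj a
  proof -
    have H1: "Jj \<subseteq> I" using that unfolding sign_sym_on_def by blast
    have H2: "((k \<in> Jj) = (i \<in> Jj) \<longrightarrow> (if s then a k i > 0 else a k i \<ge> 0)) \<and>
        ((k \<in> Jj) \<noteq> (i \<in> Jj) \<longrightarrow> (if s then a k i < 0 else a k i \<le> 0))"
      if "i \<in> I" "k \<in> I" for i k
      using that \<open>sign_sym_on s I Jj a\<close> unfolding sign_sym_on_def by simp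
    show ?thesis unfolding sign_sym_on_def
    proof (rule conjI[OF H1], intro ballI)
      fix i k assume ik: "i \<in> I" "k \<in> I"
      show "((i \<in> Jj) = (k \<in> Jj) \<longrightarrow> (if s then a k i > 0 else a k i \<ge> 0)) \<and>
        ((i \<in> Jj) \<noteq> (k \<in> Jj) \<longrightarrow> (if s then a k i < 0 else a k i \<le> 0))"
        using H2[OF ik] by metis
    qed
  qed
  have 1: "sign_sym_on s {0..<?n} {x\<in>{0..<?n}. id x \<in> J} (\<lambda>i k. transpose_mat A $$ (i, k))"
  proof (rule ss_pull[OF sym[OF J]])
    fix x y assume "x \<in> {0..<?n}" "y \<in> {0..<?n}"
    thus "transpose_mat A $$ (x, y) = A $$ (id y, id x)" using cA by simp
  qed simp
  have 2: "\<exists>Jj. sign_sym_on s (compound_index ?n j) Jj (minor (transpose_mat A))"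
    if j: "j \<in> {2..?n}" for j
  proof -
    obtain Jj where Jj: "sign_sym_on s (compound_index ?n j) Jj (minor A)"
      using D j by blast
    have m: "minor (transpose_mat A) S T = minor A T S"
      if "S \<in> compound_index ?n j" "T \<in> compound_index ?n j" for S T
    proof -
      have "S \<subseteq> {0..<?n}" "T \<subseteq> {0..<?n}" "card S = j" "card T = j"
        using that unfolding compound_index_def by auto
      hence "{i. i < ?n \<and> i \<in> S} = S" "{i. i < ?n \<and> i \<in> T} = T" "card S = j" "card T = j" by auto
      hence "submatrix A T S \<in> carrier_mat j j"
        using cA unfolding carrier_mat_def by (simp add: dim_submatrix)
      thus ?thesis unfolding minor_def submatrix_transpose by (simp add: det_transpose)
    qed
    show ?thesis
    proof (rule exI, rule ss_pull[OF sym[OF Jj], where f=id])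
      fix x y assume "x \<in> compound_index ?n j" "y \<in> compound_index ?n j"
      thus "minor (transpose_mat A) x y = minor A (id y) (id x)" using m by simp
    qed simp
  qed
  have "transpose_mat A \<in> carrier_mat ?n ?n"
    by (rule carrier_matI) (fact dr, fact index_transpose_mat(3))
  then show ?thesis unfolding total_sign_sym_def dr
    by (intro conjI exI[of _ "{x\<in>{0..<?n}. id x \<in> J}"] 1 ballI 2)
qed


lemma tss_principal:
  assumes "total_sign_sym s A" "A \<in> carrier_mat n n" "M \<subseteq> {0..<n}"
  shows "total_sign_sym s (principal_submatrix A M)"
proof -
  let ?B = "submatrix A M M"
  let ?m = "card M"
  note D = assms(1)[unfolded total_sign_sym_def]
  have dA: "dim_row A = n" using assms(2) by (rule carrier_matD(1))
  have cA: "dim_col A = n" using assms(2) by (rule carrier_matD(2))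
  have MM: "{i. i < n \<and> i \<in> M} = M" using assms(3) by auto
  have dr: "dim_row ?B = ?m" unfolding dim_submatrix(1) dA MM ..
  have dc: "dim_col ?B = ?m" unfolding dim_submatrix(2) cA MM ..
  have B: "?B \<in> carrier_mat ?m ?m" by (rule carrier_matI) (fact dr, fact dc)
  have mn: "?m \<le> n" using assms(3) by (metis card_atLeastLessThan card_mono finite_atLeastLessThan minus_nat.diff_0)
  have pickn: "pick M i < n" if "i < ?m" for i using that pick_in_set[of i M] assms(3) by auto
  have Bij: "?B $$ (i,k) = A $$ (pick M i, pick M k)" if "i < ?m" "k < ?m" for i k
    by (rule submatrix_index) (use that in \<open>simp_all only: dA cA MM\<close>)
  obtain J where J: "sign_sym_on s {0..<n} J (\<lambda>i k. A $$ (i, k))"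
    using D[unfolded dA] by (elim conjE exE)
  have 1: "sign_sym_on s {0..<?m} {x\<in>{0..<?m}. pick M x \<in> J} (\<lambda>i k. ?B $$ (i, k))"
  proof (rule ss_pull[OF J])
    fix x assume "x \<in> {0..<?m}" thus "pick M x \<in> {0..<n}" using pickn by simp
  next
    fix x y assume "x \<in> {0..<?m}" "y \<in> {0..<?m}"
    thus "?B $$ (x, y) = A $$ (pick M x, pick M y)" using Bij by simp
  qed
  have 2: "\<exists>Jj. sign_sym_on s (compound_index ?m j) Jj (minor ?B)"
    if j: "j \<in> {2..?m}" for j
  proof -
    have jn: "j \<in> {2..n}" using j mn by simp
    obtain Jj where Jj: "sign_sym_on s (compound_index n j) Jj (minor A)"
      using D[unfolded dA] jn by blast
    have phi: "pick M ` S \<in> compound_index n j" if "S \<in> compound_index ?m j" for S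
    proof -
      have S: "S \<subseteq> {..<?m}" "card S = j" using that unfolding compound_index_def by auto
      have "inj_on (pick M) S" using S(1) by (auto intro: inj_on_subset[OF pick_inj])
      hence "card (pick M ` S) = j" using S(2) by (simp add: card_image)
      moreover have "pick M ` S \<subseteq> {0..<n}" using S(1) pickn by auto
      ultimately show ?thesis unfolding compound_index_def by simp
    qed
    have sub: "submatrix ?B S T = submatrix A (pick M ` S) (pick M ` T)"
      if S: "S \<in> compound_index ?m j" and T: "T \<in> compound_index ?m j" for S T
    proof -
      have S': "S \<subseteq> {..<?m}" "T \<subseteq> {..<?m}" using S T unfolding compound_index_def by auto
      have c1: "{i. i < ?m \<and> i \<in> S} = S" "{i. i < ?m \<and> i \<in> T} = T"
        using S' by auto
      have "inj_on (pick M) S" "inj_on (pick M) T" using pick_inj S'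
        by (auto intro: inj_on_subset)
      hence cc: "card (pick M ` S) = card S" "card (pick M ` T) = card T" by (simp_all add: card_image)
      have c2: "{i. i < n \<and> i \<in> pick M ` S} = pick M ` S" "{i. i < n \<and> i \<in> pick M ` T} = pick M ` T"
        using phi[OF S] phi[OF T] unfolding compound_index_def by auto
      have d1: "dim_row (submatrix ?B S T) = card S" "dim_col (submatrix ?B S T) = card T"
        unfolding dim_submatrix(1)[of ?B S T] dim_submatrix(2)[of ?B S T] dr dc c1 by simp_all
      have d2: "dim_row (submatrix A (pick M ` S) (pick M ` T)) = card S"
               "dim_col (submatrix A (pick M ` S) (pick M ` T)) = card T"
        unfolding dim_submatrix dA cA c2 cc by simp_all
      show ?thesis
      proof (rule eq_matI)
        fix a b assume ab: "a < dim_row (submatrix A (pick M ` S) (pick M ` T))"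
          "b < dim_col (submatrix A (pick M ` S) (pick M ` T))"
        hence ab': "a < card S" "b < card T" unfolding d2 .
        have pa: "pick S a \<in> S" "pick T b \<in> T" using ab' pick_in_set by auto
        hence pa': "pick S a < ?m" "pick T b < ?m" using S' by auto
        have "submatrix ?B S T $$ (a, b) = ?B $$ (pick S a, pick T b)"
          by (rule submatrix_index) (simp_all only: dr dc c1 ab')
        also have "\<dots> = A $$ (pick M (pick S a), pick M (pick T b))" using Bij pa' by simp
        also have "\<dots> = A $$ (pick (pick M ` S) a, pick (pick M ` T) b)"
          by (simp only: pick_comp[OF S'(1) ab'(1)] pick_comp[OF S'(2) ab'(2)])
        also have "\<dots> = submatrix A (pick M ` S) (pick M ` T) $$ (a, b)"
          by (rule submatrix_index[symmetric]) (simp_all only: dA cA c2 cc ab')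
        finally show "submatrix ?B S T $$ (a, b) = submatrix A (pick M ` S) (pick M ` T) $$ (a, b)" .
      qed (simp_all only: d1 d2)
    qed
    show ?thesis
    proof (rule exI, rule ss_pull[OF Jj, where f="\<lambda>S. pick M ` S"])
      fix x assume "x \<in> compound_index ?m j" thus "pick M ` x \<in> compound_index n j" by (rule phi)
    next
      fix x y assume "x \<in> compound_index ?m j" "y \<in> compound_index ?m j"
      thus "minor ?B x y = minor A (pick M ` x) (pick M ` y)" unfolding minor_def using sub by simp
    qed
  qed
  show ?thesis unfolding principal_submatrix_def total_sign_sym_def dr
    by (intro conjI exI[of _ "{x\<in>{0..<?m}. pick M x \<in> J}"] B 1 ballI 2)
qed

theorem proposition29:
  fixes A :: "real mat" and n :: nat
  assumes "A \<in> carrier_mat n n"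
  shows "(TJS A \<longrightarrow> TJS (transpose_mat A) \<and>
            (\<forall>M. M \<subseteq> {0..<n} \<longrightarrow>
               TJS (principal_submatrix A M) \<and> TJS (principal_submatrix (transpose_mat A) M)))
       \<and> (STJS A \<longrightarrow> STJS (transpose_mat A) \<and>
            (\<forall>M. M \<subseteq> {0..<n} \<longrightarrow>
               STJS (principal_submatrix A M) \<and> STJS (principal_submatrix (transpose_mat A) M)))"
proof -
  have AT: "transpose_mat A \<in> carrier_mat n n" unfolding transpose_carrier_mat by (rule assms)
  show ?thesis using tss_transpose tss_principal[OF _ assms] tss_principal[OF _ AT] by blast
qed

end
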